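(* Let $\mathcal{U},\mathcal{X}$ be Banach spaces with either $\mathcal{X}=\mathcal{U}^*$ or $\mathcal{U}=\mathcal{X}^*$ (duality pairing $\langle\cdot,\cdot\rangle_{\mathcal{U},\mathcal{X}}$), $\mathcal{W},\mathcal{Y}$ reflexive Banach spaces, $\mathcal{G}$ a Hilbert space, $g^\delta\in\mathcal{G}$, $\alpha>0$, $A\in L(\mathcal{Y},\mathcal{W}^* )$ continuously invertible, $B\in L(\mathcal{U},\mathcal{W}^* )$ admitting $B^*\in L(\mathcal{W},\mathcal{X})$ with $\langle Bu,w\rangle_{\mathcal{W}^*,\mathcal{W}}=\langle u,B^*w\rangle_{\mathcal{U},\mathcal{X}}$ for all $u\in\mathcal{U}$, $w\in\mathcal{W}$, and $C\in L(\mathcal{Y},\mathcal{G})$. Let $\mathcal{R}_\alpha$ be the indicator function of the closed ball $B^\mathcal{U}_{1/\alpha}=\{u\in\mathcal{U}:\|u\|_\mathcal{U}\le1/\alpha\}$ and $J_\alpha(u,y)=\frac12\|Cy-g^\delta\|_\mathcal{G}^2+\mathcal{R}_\alpha(u)$. Let $\mathcal{U}_h\subset\mathcal{U}$, $\mathcal{Y}_h\subset\mathcal{Y}$, $\mathcal{W}_h\subset\mathcal{W}$ be finite-dimensional subspaces. Let $(\bar u,\bar y)$ minimize $J_\alpha$ over $\mathcal{U}\times\mathcal{Y}$ subject to $Ay=Bu$, and let $(\bar u_h,\bar y_h)$ minimize $J_\alpha$ over $\mathcal{U}_h\times\mathcal{Y}_h$ subject to $\langle Ay-Bu,w_h\rangle_{\mathcal{W}^*,\mathcal{W}}=0$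 for all $w_h\in\mathcal{W}_h$. Let $\hat w\in\mathcal{W}$ be the solution of $C^*(C\bar y_h-g^\delta)+A^*\hat w=0$ and $\rho_y:=A\bar y_h-B\bar u_h$. Then $$\|C\bar y_h-C\bar y\|_\mathcal{G}^2\le\frac4\alpha\|B^*\hat w\|_\mathcal{X}-4\langle\bar u_h,B^*\hat w\rangle_{\mathcal{U},\mathcal{X}}+4\|CA^{-1}\rho_y\|_\mathcal{G}^2,$$ $$J_\alpha(\bar u_h,\bar y_h)-J_\alpha(\bar u,\bar y)\le\frac1\alpha\|B^*\hat w\|_\mathcal{X}-\langle\bar u_h,B^*\hat w\rangle_{\mathcal{U},\mathcal{X}}+\|CA^{-1}\rho_y\|_\mathcal{G}\,\|C\bar y_h-g^\delta\|_\mathcal{G}.$$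
   Context: $A^*\in L(\mathcal{W},\mathcal{Y}^* )$ and $C^*\in L(\mathcal{G},\mathcal{Y}^* )$ denote the adjoints defined by $\langle Ay,w\rangle_{\mathcal{W}^*,\mathcal{W}}=\langle y,A^*w\rangle_{\mathcal{Y},\mathcal{Y}^*}$ and $(Cy,g)_\mathcal{G}=\langle y,C^*g\rangle_{\mathcal{Y},\mathcal{Y}^*}$. *)

theory Defs
  imports "HOL-Analysis.Analysis" "HOL-Library.Extended_Real"
begin

text \<open>Duality pairing between real Banach spaces U and X: the pairing is the
  canonical evaluation under an isometric isomorphism X = U* or U = X*.\<close>
definition dual_pairing :: "('u::real_normed_vector \<Rightarrow> 'x::real_normed_vector \<Rightarrow> real) \<Rightarrow> bool" where
  "dual_pairing p \<longleftrightarrow> bounded_bilinear p \<and>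
     ((bij (\<lambda>x. Blinfun (\<lambda>u. p u x)) \<and> (\<forall>x. norm (Blinfun (\<lambda>u. p u x)) = norm x)) \<or>
      (bij (\<lambda>u. Blinfun (\<lambda>x. p u x)) \<and> (\<forall>u. norm (Blinfun (\<lambda>x. p u x)) = norm u)))"

definition reflexive_space :: "'a::real_normed_vector itself \<Rightarrow> bool" where
  "reflexive_space _ \<longleftrightarrow>
     surj (\<lambda>x::'a. Blinfun (\<lambda>f::'a \<Rightarrow>\<^sub>L real. blinfun_apply f x))"

definition R_alpha :: "real \<Rightarrow> 'u::real_normed_vector \<Rightarrow> ereal" where
  "R_alpha \<alpha> u = (if norm u \<le> 1 / \<alpha> then 0 else \<infinity>)"

definition J_alpha :: "('y::real_normed_vector \<Rightarrow>\<^sub>L 'g::real_inner) \<Rightarrow> 'g \<Rightarrow> real \<Rightarrow> 'u::real_normed_vector \<Rightarrow> 'y \<Rightarrow> ereal" where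
  "J_alpha C g\<delta> \<alpha> u y = ereal ((1/2) * (norm (C y - g\<delta>))\<^sup>2) + R_alpha \<alpha> u"

definition finite_dim_subspace :: "'a::real_vector set \<Rightarrow> bool" where
  "finite_dim_subspace S \<longleftrightarrow> subspace S \<and> (\<exists>B. finite B \<and> S = span B)"

end

theory Submission
  imports Defs
begin

lemma pairing_bound:
  assumes "dual_pairing p"
  shows "\<bar>p u x\<bar> \<le> norm u * norm x"
proof -
  have bb: "bounded_bilinear p" using assms unfolding dual_pairing_def by blast
  have l1: "bounded_linear (\<lambda>u. p u x)" using bounded_bilinear.bounded_linear_left[OF bb] .
  have l2: "bounded_linear (\<lambda>x. p u x)" using bounded_bilinear.bounded_linear_right[OF bb] .
  from assms consider "\<forall>x. norm (Blinfun (\<lambda>u. p u x)) = norm x"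
    | "\<forall>u. norm (Blinfun (\<lambda>x. p u x)) = norm u" unfolding dual_pairing_def by blast
  then show ?thesis
  proof cases
    case 1
    have "\<bar>p u x\<bar> = norm (blinfun_apply (Blinfun (\<lambda>u. p u x)) u)"
      using l1 by (simp add: bounded_linear_Blinfun_apply)
    also have "\<dots> \<le> norm (Blinfun (\<lambda>u. p u x)) * norm u" by (rule norm_blinfun)
    finally show ?thesis using 1 by (simp add: mult.commute)
  next
    case 2
    have "\<bar>p u x\<bar> = norm (blinfun_apply (Blinfun (\<lambda>x. p u x)) x)"
      using l2 by (simp add: bounded_linear_Blinfun_apply)
    also have "\<dots> \<le> norm (Blinfun (\<lambda>x. p u x)) * norm x" by (rule norm_blinfun)
    finally show ?thesis using 2 by simp
  qed
qed

lemma var_ineq: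
  fixes a d :: "'g::real_inner"
  assumes "\<forall>t. 0 < t \<and> t \<le> 1 \<longrightarrow> (norm a)\<^sup>2 \<le> (norm (a + t *\<^sub>R d))\<^sup>2"
  shows "inner a d \<ge> 0"
proof (rule ccontr)
  assume neg: "\<not> inner a d \<ge> 0"
  then have "d \<noteq> 0" by auto
  then have nd: "(norm d)\<^sup>2 > 0" by simp
  define t where "t = min 1 (- inner a d / (norm d)\<^sup>2)"
  have "- inner a d / (norm d)\<^sup>2 > 0" using neg nd by (intro divide_pos_pos) auto
  then have t0: "t > 0" by (simp add: t_def)
  have t1: "t \<le> 1" by (simp add: t_def)
  have tb: "t * (norm d)\<^sup>2 \<le> - inner a d" using nd
    by (simp add: t_def min_def field_simps)
  have "(norm (a + t *\<^sub>R d))\<^sup>2 = inner (a + t *\<^sub>R d) (a + t *\<^sub>R d)"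
    by (rule power2_norm_eq_inner)
  also have "\<dots> = inner a a + 2 * t * inner a d + t * (t * inner d d)"
    by (simp add: inner_add_left inner_add_right inner_commute algebra_simps)
  also have "\<dots> = (norm a)\<^sup>2 + 2 * t * inner a d + t * (t * (norm d)\<^sup>2)"
    by (simp add: power2_norm_eq_inner)
  also have "\<dots> \<le> (norm a)\<^sup>2 + 2 * t * inner a d + t * (- inner a d)"
    using tb t0 by (intro add_left_mono mult_left_mono) auto
  also have "\<dots> < (norm a)\<^sup>2" using mult_pos_neg[of t "inner a d"] t0 neg by linarith
  finally have X: "(norm (a + t *\<^sub>R d))\<^sup>2 < (norm a)\<^sup>2" .
  have "(norm a)\<^sup>2 \<le> (norm (a + t *\<^sub>R d))\<^sup>2" using assms t0 t1 by blast
  with X show False by linarith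
qed

theorem proposition4p1:
  fixes p :: "'u::banach \<Rightarrow> 'x::banach \<Rightarrow> real"
    and A :: "'y::banach \<Rightarrow>\<^sub>L ('w::banach \<Rightarrow>\<^sub>L real)"
    and Ainv :: "('w \<Rightarrow>\<^sub>L real) \<Rightarrow>\<^sub>L 'y"
    and B :: "'u \<Rightarrow>\<^sub>L ('w \<Rightarrow>\<^sub>L real)"
    and Bs :: "'w \<Rightarrow>\<^sub>L 'x"
    and C :: "'y \<Rightarrow>\<^sub>L 'g::{real_inner, complete_space}"
    and g\<delta> :: 'g and \<alpha> :: real
    and Uh :: "'u set" and Yh :: "'y set" and Wh :: "'w set"
    and ub uh :: 'u and yb yh :: 'y and w_hat :: 'w
  assumes pairing: "dual_pairing p"
    and reflW: "reflexive_space TYPE('w)"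
    and reflY: "reflexive_space TYPE('y)"
    and alpha_pos: "\<alpha> > 0"
    and Ainv_left: "\<forall>y. Ainv (A y) = y"
    and Ainv_right: "\<forall>f. A (Ainv f) = f"
    and Bs_adj: "\<forall>u w. B u w = p u (Bs w)"
    and Uh: "finite_dim_subspace Uh" and Yh: "finite_dim_subspace Yh"
    and Wh: "finite_dim_subspace Wh"
    and cont_constr: "A yb = B ub"
    and cont_min: "\<forall>u y. A y = B u \<longrightarrow> J_alpha C g\<delta> \<alpha> ub yb \<le> J_alpha C g\<delta> \<alpha> u y"
    and disc_mem: "uh \<in> Uh" "yh \<in> Yh"
    and disc_constr: "\<forall>wh\<in>Wh. (A yh - B uh) wh = 0"
    and disc_min: "\<forall>u\<in>Uh. \<forall>y\<in>Yh. (\<forall>wh\<in>Wh. (A y - B u) wh = 0) \<longrightarrow>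
                     J_alpha C g\<delta> \<alpha> uh yh \<le> J_alpha C g\<delta> \<alpha> u y"
    and w_hat_eq: "\<forall>y. inner (C y) (C yh - g\<delta>) + A y w_hat = 0"
  shows "((norm (C yh - C yb))\<^sup>2 \<le> 4 / \<alpha> * norm (Bs w_hat) - 4 * p uh (Bs w_hat)
            + 4 * (norm (C (Ainv (A yh - B uh))))\<^sup>2) \<and>
         (J_alpha C g\<delta> \<alpha> uh yh - J_alpha C g\<delta> \<alpha> ub yb \<le>
           ereal (1 / \<alpha> * norm (Bs w_hat) - p uh (Bs w_hat)
                  + norm (C (Ainv (A yh - B uh))) * norm (C yh - g\<delta>)))"
proof -
  have J00: "J_alpha C g\<delta> \<alpha> (0::'u) (0::'y) = ereal ((1/2) * (norm g\<delta>)\<^sup>2)"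
    using alpha_pos by (simp add: J_alpha_def R_alpha_def)
  have Jinf: "J_alpha C g\<delta> \<alpha> u y = \<infinity>" if "\<not> norm u \<le> 1/\<alpha>" for u :: 'u and y :: 'y
    using that by (simp add: J_alpha_def R_alpha_def)
  have Jfin: "J_alpha C g\<delta> \<alpha> u y = ereal ((1/2) * (norm (C y - g\<delta>))\<^sup>2)" if "norm u \<le> 1/\<alpha>"
    for u :: 'u and y :: 'y
    using that by (simp add: J_alpha_def R_alpha_def)
  have U0: "(0::'u) \<in> Uh" using Uh
    by (auto simp: finite_dim_subspace_def subspace_0)
  have Y0: "(0::'y) \<in> Yh" using Yh
    by (auto simp: finite_dim_subspace_def subspace_0)
  have W0: "\<forall>wh\<in>Wh. (A 0 - B 0) wh = 0" by (simp add: blinfun.zero_right)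
  have "J_alpha C g\<delta> \<alpha> uh yh \<le> J_alpha C g\<delta> \<alpha> (0::'u) (0::'y)"
    using mp[OF bspec[OF bspec[OF disc_min U0] Y0] W0] .
  then have uhb: "norm uh \<le> 1/\<alpha>"
  proof (rule contrapos_pp)
    assume "\<not> norm uh \<le> 1/\<alpha>"
    then have "J_alpha C g\<delta> \<alpha> uh yh = \<infinity>" by (rule Jinf)
    then show "\<not> J_alpha C g\<delta> \<alpha> uh yh \<le> J_alpha C g\<delta> \<alpha> (0::'u) (0::'y)" using J00 by simp
  qed
  have "J_alpha C g\<delta> \<alpha> ub yb \<le> J_alpha C g\<delta> \<alpha> (0::'u) (0::'y)" using cont_min by simp
  then have ubb: "norm ub \<le> 1/\<alpha>"
  proof (rule contrapos_pp)
    assume "\<not> norm ub \<le> 1/\<alpha>"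
    then have "J_alpha C g\<delta> \<alpha> ub yb = \<infinity>" by (rule Jinf)
    then show "\<not> J_alpha C g\<delta> \<alpha> ub yb \<le> J_alpha C g\<delta> \<alpha> (0::'u) (0::'y)" using J00 by simp
  qed
  have yb_eq: "yb = Ainv (B ub)" using Ainv_left[rule_format, of yb] cont_constr by simp
  define \<rho> where "\<rho> = A yh - B uh"
  define yt where "yt = Ainv (B uh)"
  have yt_eq: "yt = yh - Ainv \<rho>"
    using Ainv_left by (simp add: yt_def \<rho>_def blinfun.diff_right)
  define r where "r = C (Ainv \<rho>)"
  define a where "a = C yt - C yb"
  define D where "D = 1/\<alpha> * norm (Bs w_hat) - p uh (Bs w_hat)"
  have pb0: "p ub (Bs w_hat) \<le> norm ub * norm (Bs w_hat)"
    using pairing_bound[OF pairing, of ub "Bs w_hat"] by (simp add: abs_le_iff)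
  also have "\<dots> \<le> 1/\<alpha> * norm (Bs w_hat)" using ubb by (rule mult_right_mono) simp
  finally have pb: "p ub (Bs w_hat) \<le> 1/\<alpha> * norm (Bs w_hat)" .
  have key: "inner (C yh - g\<delta>) a \<le> D"
  proof -
    have "inner (C yh - g\<delta>) a = inner (C (yt - yb)) (C yh - g\<delta>)"
      by (simp add: a_def blinfun.diff_right inner_commute)
    also have "\<dots> = - A (yt - yb) w_hat" using w_hat_eq[rule_format, of "yt - yb"] by linarith
    also have "A (yt - yb) = B uh - B ub"
      using Ainv_right cont_constr by (simp add: yt_def blinfun.diff_right)
    also have "- (B uh - B ub) w_hat = p ub (Bs w_hat) - p uh (Bs w_hat)"
      using Bs_adj by (simp add: minus_blinfun.rep_eq)
    finally show ?thesis using pb by (simp add: D_def)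
  qed
  have r_def': "C (Ainv (A yh - B uh)) = r" by (simp add: r_def \<rho>_def)
  have cyh: "C yh - C yb = a + r"
    by (simp add: a_def r_def yt_eq blinfun.diff_right)
  have opt: "inner (C yb - g\<delta>) a \<ge> 0"
  proof (rule var_ineq, intro allI impI)
    fix t :: real assume t: "0 < t \<and> t \<le> 1"
    define ut where "ut = ub + t *\<^sub>R (uh - ub)"
    have ut_eq: "ut = (1 - t) *\<^sub>R ub + t *\<^sub>R uh" by (simp add: ut_def algebra_simps)
    have "norm ut \<le> norm ((1 - t) *\<^sub>R ub) + norm (t *\<^sub>R uh)"
      unfolding ut_eq by (rule norm_triangle_ineq)
    also have "\<dots> = (1-t) * norm ub + t * norm uh" using t by simp
    also have "\<dots> \<le> (1-t) * (1/\<alpha>) + t * (1/\<alpha>)"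
      using t ubb uhb by (intro add_mono mult_left_mono) auto
    finally have utb: "norm ut \<le> 1/\<alpha>" by (simp add: add_divide_distrib[symmetric])
    define ytt where "ytt = Ainv (B ut)"
    have "A ytt = B ut" using Ainv_right by (simp add: ytt_def)
    then have "J_alpha C g\<delta> \<alpha> ub yb \<le> J_alpha C g\<delta> \<alpha> ut ytt" using cont_min by blast
    then have le: "(norm (C yb - g\<delta>))\<^sup>2 \<le> (norm (C ytt - g\<delta>))\<^sup>2"
      using Jfin[OF utb] Jfin[OF ubb] by simp
    have "C ytt = C yb + t *\<^sub>R a"
      by (simp add: ytt_def ut_def yb_eq a_def yt_def blinfun.add_right blinfun.diff_right
          blinfun.scaleR_right)
    then have "C ytt - g\<delta> = (C yb - g\<delta>) + t *\<^sub>R a" by simp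
    then show "(norm (C yb - g\<delta>))\<^sup>2 \<le> (norm ((C yb - g\<delta>) + t *\<^sub>R a))\<^sup>2" using le by (simp only:)
  qed
  have aa: "(norm a)\<^sup>2 \<le> D - inner r a"
  proof -
    have "C yt - g\<delta> = (C yh - g\<delta>) - r" by (simp add: yt_eq r_def blinfun.diff_right)
    have "(norm a)\<^sup>2 = inner (C yt - g\<delta>) a - inner (C yb - g\<delta>) a"
      by (simp add: a_def power2_norm_eq_inner inner_diff_left)
    also have "\<dots> \<le> inner (C yt - g\<delta>) a" using opt by simp
    also have "C yt - g\<delta> = (C yh - g\<delta>) - r" by (simp add: yt_eq r_def blinfun.diff_right)
    also have "inner \<dots> a = inner (C yh - g\<delta>) a - inner r a" by (simp add: inner_diff_left)
    finally show ?thesis using key by simp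
  qed
  have cs: "inner r a \<ge> - (norm r * norm a)"
    using Cauchy_Schwarz_ineq2[of r a] by simp
  have a2: "(norm a)\<^sup>2 \<le> 2 * D + (norm r)\<^sup>2"
  proof -
    have "norm r * norm a \<le> (norm r)\<^sup>2 / 2 + (norm a)\<^sup>2 / 2"
      using sum_squares_bound[of "norm r" "norm a"] by (simp add: power2_eq_square)
    then show ?thesis using aa cs by linarith
  qed
  have "(norm (a + r))\<^sup>2 \<le> 2 * (norm a)\<^sup>2 + 2 * (norm r)\<^sup>2"
  proof -
    have "(norm (a + r))\<^sup>2 \<le> (norm a + norm r)\<^sup>2"
      by (simp add: norm_triangle_ineq power_mono)
    also have "\<dots> \<le> 2 * (norm a)\<^sup>2 + 2 * (norm r)\<^sup>2"
      using sum_squares_bound[of "norm r" "norm a"] by (simp add: power2_eq_square algebra_simps)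
    finally show ?thesis .
  qed
  then have first: "(norm (C yh - C yb))\<^sup>2 \<le> 4 * D + 4 * (norm r)\<^sup>2"
    using a2 cyh by simp
  have second: "(1/2) * (norm (C yh - g\<delta>))\<^sup>2 - (1/2) * (norm (C yb - g\<delta>))\<^sup>2
      \<le> D + norm r * norm (C yh - g\<delta>)"
  proof -
    define e where "e = C yh - g\<delta>"
    define f where "f = C yb - g\<delta>"
    have ef: "e - f = a + r" using cyh by (simp add: e_def f_def)
    have "(1/2) * (norm e)\<^sup>2 - (1/2) * (norm f)\<^sup>2 = inner e (e - f) - (1/2) * (norm (e - f))\<^sup>2"
      by (simp add: power2_norm_eq_inner inner_diff_left inner_diff_right inner_commute
          algebra_simps)
    also have "\<dots> \<le> inner e (e - f)" by simp
    also have "\<dots> = inner e a + inner r e" by (simp add: ef inner_add_right inner_commute)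
    also have "\<dots> \<le> D + norm r * norm e"
      using key Cauchy_Schwarz_ineq2[of r e] by (simp add: e_def)
    finally show ?thesis by (simp add: e_def f_def)
  qed
  show ?thesis
  proof
    show "(norm (C yh - C yb))\<^sup>2 \<le> 4 / \<alpha> * norm (Bs w_hat) - 4 * p uh (Bs w_hat)
            + 4 * (norm (C (Ainv (A yh - B uh))))\<^sup>2"
    proof -
      have "4 * D = 4 / \<alpha> * norm (Bs w_hat) - 4 * p uh (Bs w_hat)"
        unfolding D_def by (simp add: right_diff_distrib)
      then show ?thesis using first unfolding r_def' by linarith
    qed
    have "J_alpha C g\<delta> \<alpha> uh yh - J_alpha C g\<delta> \<alpha> ub yb =
       ereal ((1/2) * (norm (C yh - g\<delta>))\<^sup>2 - (1/2) * (norm (C yb - g\<delta>))\<^sup>2)"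
      unfolding Jfin[OF uhb] Jfin[OF ubb] by (rule ereal_minus(1))
    also have "\<dots> \<le> ereal (D + norm r * norm (C yh - g\<delta>))"
      using second by (simp only: ereal_less_eq(3))
    finally show "J_alpha C g\<delta> \<alpha> uh yh - J_alpha C g\<delta> \<alpha> ub yb \<le>
           ereal (1 / \<alpha> * norm (Bs w_hat) - p uh (Bs w_hat)
                  + norm (C (Ainv (A yh - B uh))) * norm (C yh - g\<delta>))"
      unfolding r_def' D_def .
  qed
qed

end
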